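(* Let $S\subseteq\Sigma^*$ and $T\subseteq\Sigma^+$ be regular languages of finite words, and let $T^\omega=\{x_1x_2x_3\cdots : x_i\in T\}$. Then $$\Psi(S\cdot T^\omega)=\{\Psi(y)\oplus\mathfrak{m}_\Gamma \;:\; y\in S\cdot T^*,\ \mathfrak{m}_\Gamma\in I(T)\},$$ where for nonempty $\Gamma\subseteq\Sigma$, $\mathfrak{m}_\Gamma$ is the mask with $\mathfrak{m}_\Gamma(\sigma)=\infty$ iff $\sigma\in\Gamma$, and $I(T)$ is the set of masks $\mathfrak{m}_\Gamma$ ($\emptyset\neq\Gamma\subseteq\Sigma$) such that for every $\sigma\in\Gamma$ there exists $w\in T\cap\Gamma^*$ in which $\sigma$ occurs.
   Context: For a finite word $x$, $\Psi(x)\in\mathbb{N}^\Sigma$ is its Parikh image (number of occurrences of each letter). For an infinite word $w\in\Sigma^\omega$, $\Psi(w)\in\mathbb{N}_\infty^\Sigma$ gives for each letter its number of occurrences if finite and $\infty$ otherwise; $\Psi(L)=\{\Psi(w):w\in L\}$. A mask is a vector in $\{0,\infty\}^\Sigma\setminus\{\vec 0\}$; for $\vec x\in\mathbb{N}^\Sigma$ and a mask $\mathfrak{m}$, $\vec x\oplus\mathfrak{m}$ has coordinate $\vec x(\sigma)$ where $\mathfrak{m}(\sigma)=0$ and $\infty$ where $\mathfrak{m}(\sigma)=\infty$. *)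

theory Defs
  imports Main "HOL-Library.Omega_Words_Fun" "HOL-Library.Extended_Nat"
begin

definition lang_conc :: "'a list set \<Rightarrow> 'a list set \<Rightarrow> 'a list set" where
  "lang_conc A B = {u @ v | u v. u \<in> A \<and> v \<in> B}"

definition lang_star :: "'a list set \<Rightarrow> 'a list set" where
  "lang_star A = {concat xs | xs. set xs \<subseteq> A}"

inductive regular :: "'a list set \<Rightarrow> bool" where
  reg_empty: "regular {}"
| reg_eps: "regular {[]}"
| reg_letter: "regular {[a]}"
| reg_union: "regular A \<Longrightarrow> regular B \<Longrightarrow> regular (A \<union> B)"
| reg_conc: "regular A \<Longrightarrow> regular B \<Longrightarrow> regular (lang_conc A B)"
| reg_star: "regular A \<Longrightarrow> regular (lang_star A)"

definition omega_power :: "'a list set \<Rightarrow> 'a word set" where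
  "omega_power T = {w. \<exists>p :: nat \<Rightarrow> nat. p 0 = 0 \<and> strict_mono p \<and>
       (\<forall>i. subsequence w (p i) (p (Suc i)) \<in> T)}"

definition lang_omega_conc :: "'a list set \<Rightarrow> 'a word set \<Rightarrow> 'a word set" where
  "lang_omega_conc S W = {u \<frown> w | u w. u \<in> S \<and> w \<in> W}"

definition parikh :: "'a list \<Rightarrow> 'a \<Rightarrow> nat" where
  "parikh x = (\<lambda>\<sigma>. count_list x \<sigma>)"

definition parikh_omega :: "'a word \<Rightarrow> 'a \<Rightarrow> enat" where
  "parikh_omega w = (\<lambda>\<sigma>. if finite {n. w n = \<sigma>} then enat (card {n. w n = \<sigma>}) else \<infinity>)"

definition mask_of :: "'a set \<Rightarrow> 'a \<Rightarrow> enat" where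
  "mask_of \<Gamma> = (\<lambda>\<sigma>. if \<sigma> \<in> \<Gamma> then \<infinity> else 0)"

definition mask_add :: "('a \<Rightarrow> nat) \<Rightarrow> ('a \<Rightarrow> enat) \<Rightarrow> 'a \<Rightarrow> enat" (infixl \<open>\<oplus>\<^sub>m\<close> 65) where
  "x \<oplus>\<^sub>m m = (\<lambda>\<sigma>. if m \<sigma> = \<infinity> then \<infinity> else enat (x \<sigma>))"

definition I_masks :: "'a list set \<Rightarrow> ('a \<Rightarrow> enat) set" where
  "I_masks T = {mask_of \<Gamma> | \<Gamma>. \<Gamma> \<noteq> {} \<and>
      (\<forall>\<sigma>\<in>\<Gamma>. \<exists>w\<in>T. set w \<subseteq> \<Gamma> \<and> \<sigma> \<in> set w)}"

end

theory Submission
  imports Defs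
begin

lemma interval_ex:
  assumes "strict_mono (p::nat\<Rightarrow>nat)" "p 0 = 0"
  shows "\<exists>i. p i \<le> n \<and> n < p (Suc i)"
proof -
  have "idx_sequence p" using assms by (simp add: idx_sequence_def strict_mono_Suc_iff)
  from idx_sequence_interval[OF this] show ?thesis by auto
qed

lemma interval_unique:
  assumes "strict_mono (p::nat\<Rightarrow>nat)" "p i \<le> n" "n < p (Suc i)" "p j \<le> n" "n < p (Suc j)"
  shows "i = j"
proof (rule ccontr)
  assume "i \<noteq> j"
  then consider "Suc i \<le> j" | "Suc j \<le> i" by linarith
  then show False
  proof cases
    case 1 then have "p (Suc i) \<le> p j" using assms(1) by (simp add: strict_mono_less_eq)
    then show False using assms by linarith
  next
    case 2 then have "p (Suc j) \<le> p i" using assms(1) by (simp add: strict_mono_less_eq)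
    then show False using assms by linarith
  qed
qed

lemma subseq_app:
  assumes "i \<le> j" "j \<le> k"
  shows "w[i \<rightarrow> j] @ w[j \<rightarrow> k] = w[i \<rightarrow> k]"
proof -
  have "[i..<k] = [i..<j] @ [j..<k]" using assms
    by (metis le_add_diff_inverse upt_add_eq_append)
  then show ?thesis by (simp add: subsequence_def)
qed

lemma concat_pieces:
  assumes "mono (p::nat\<Rightarrow>nat)"
  shows "concat (map (\<lambda>i. w[p i \<rightarrow> p (Suc i)]) [0..<N]) = w[p 0 \<rightarrow> p N]"
proof (induction N)
  case 0 then show ?case by simp
next
  case (Suc N)
  have "p 0 \<le> p N" "p N \<le> p (Suc N)" using assms by (auto simp: mono_def)
  then show ?case using Suc by (simp add: subseq_app)
qed

lemma sm_add:
  assumes "strict_mono (p::nat\<Rightarrow>nat)"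
  shows "p a + d \<le> p (a + d)"
proof (induction d)
  case 0 then show ?case by simp
next
  case (Suc d)
  have "p (a + d) < p (a + Suc d)" using assms by (simp add: strict_mono_def)
  then show ?case using Suc by simp
qed

lemma pos_inf:
  assumes "infinite {n. v n = \<sigma>}"
  shows "parikh_omega (y \<frown> v) \<sigma> = \<infinity>"
proof -
  have "(\<lambda>n. n + length y) ` {n. v n = \<sigma>} \<subseteq> {n. (y \<frown> v) n = \<sigma>}" by auto
  moreover have "infinite ((\<lambda>n. n + length y) ` {n. v n = \<sigma>})"
    using assms by (simp add: finite_image_iff inj_on_def)
  ultimately have "infinite {n. (y \<frown> v) n = \<sigma>}" using finite_subset by blast
  then show ?thesis by (simp add: parikh_omega_def)
qed

lemma pos_fin:
  assumes "\<forall>n. v n \<noteq> \<sigma>"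
  shows "parikh_omega (y \<frown> v) \<sigma> = enat (count_list y \<sigma>)"
proof -
  have eq: "{n. (y \<frown> v) n = \<sigma>} = {i. i < length y \<and> \<sigma> = y ! i}"
    using assms by (auto simp: conc_def split: if_splits)
  have "count_list y \<sigma> = card {i. i < length y \<and> \<sigma> = y ! i}"
    by (simp add: count_list_eq_length_filter length_filter_conv_card)
  then show ?thesis unfolding parikh_omega_def eq by simp
qed

definition cuts :: "(nat \<Rightarrow> 'a list) \<Rightarrow> nat \<Rightarrow> nat" where
  "cuts q i = (\<Sum>j<i. length (q j))"

definition flat :: "(nat \<Rightarrow> 'a list) \<Rightarrow> 'a word" where
  "flat q n = (let i = THE i. cuts q i \<le> n \<and> n < cuts q (Suc i) in q i ! (n - cuts q i))"

lemma cuts_Suc: "cuts q (Suc i) = cuts q i + length (q i)"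
  by (simp add: cuts_def)

lemma cuts_sm: "\<forall>i. q i \<noteq> [] \<Longrightarrow> strict_mono (cuts q)"
  by (simp add: strict_mono_Suc_iff cuts_Suc)

lemma cuts_0: "cuts q 0 = 0" by (simp add: cuts_def)

lemma flat_nth:
  assumes "\<forall>i. q i \<noteq> []" "cuts q i \<le> n" "n < cuts q (Suc i)"
  shows "flat q n = q i ! (n - cuts q i)"
proof -
  have "(THE i. cuts q i \<le> n \<and> n < cuts q (Suc i)) = i"
    apply (rule the_equality)
    using assms interval_unique[OF cuts_sm[OF assms(1)]] by blast+
  then show ?thesis by (simp add: flat_def)
qed

lemma flat_sub:
  assumes "\<forall>i. q i \<noteq> []"
  shows "(flat q)[cuts q i \<rightarrow> cuts q (Suc i)] = q i"
proof (rule nth_equalityI)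
  show "length ((flat q)[cuts q i \<rightarrow> cuts q (Suc i)]) = length (q i)"
    by (simp add: cuts_Suc)
  fix k assume "k < length ((flat q)[cuts q i \<rightarrow> cuts q (Suc i)])"
  then have k: "k < length (q i)" by (simp add: cuts_Suc)
  then show "(flat q)[cuts q i \<rightarrow> cuts q (Suc i)] ! k = q i ! k"
    using flat_nth[OF assms, of i "cuts q i + k"] by (simp add: cuts_Suc)
qed


lemma sub_dir:
  fixes S T :: "('a::finite) list set"
  assumes uS: "u \<in> S" and wT: "w \<in> omega_power T"
  shows "\<exists>y m. parikh_omega (u \<frown> w) = parikh y \<oplus>\<^sub>m m \<and> y \<in> lang_conc S (lang_star T) \<and> m \<in> I_masks T"
proof -
  obtain p where p0: "p 0 = 0" and sm: "strict_mono p" and pT: "\<forall>i. w[p i \<rightarrow> p (Suc i)] \<in> T"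
    using wT by (auto simp: omega_power_def)
  have mo: "mono p" using sm by (simp add: strict_mono_mono)
  define \<Gamma> where "\<Gamma> = {\<sigma>. infinite {n. w n = \<sigma>}}"
  have "{n. w n \<notin> \<Gamma>} = (\<Union>\<sigma>\<in>-\<Gamma>. {n. w n = \<sigma>})" by auto
  then have finF: "finite {n. w n \<notin> \<Gamma>}" by (simp add: \<Gamma>_def)
  from finite_nat_bounded[OF finF] obtain B where "{n. w n \<notin> \<Gamma>} \<subseteq> {..<B}" by (elim exE)
  then have B: "\<And>n. w n \<notin> \<Gamma> \<Longrightarrow> n < B" by auto
  have pB: "B \<le> p B" using sm strict_mono_imp_increasing by blast
  define y where "y = u @ w[0 \<rightarrow> p B]"
  define v where "v = suffix (p B) w"
  have uw: "u \<frown> w = y \<frown> v"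
    unfolding y_def v_def using prefix_suffix[of w "p B"] by (metis conc_conc)
  have vG: "v n \<in> \<Gamma>" for n
  proof -
    have "\<not> (p B + n < B)" using pB by linarith
    then show ?thesis using B[of "p B + n"] by (auto simp: v_def)
  qed
  have yL: "y \<in> lang_conc S (lang_star T)"
  proof -
    define xs where "xs = map (\<lambda>i. w[p i \<rightarrow> p (Suc i)]) [0..<B]"
    have A: "w[0 \<rightarrow> p B] = concat xs"
      using concat_pieces[OF mo, of w B] p0 by (simp add: xs_def)
    have C: "set xs \<subseteq> T" using pT by (auto simp: xs_def)
    have "w[0 \<rightarrow> p B] \<in> lang_star T" unfolding lang_star_def
      by (rule CollectI, rule exI[of _ xs], rule conjI[OF A C])
    then show ?thesis unfolding lang_conc_def y_def using uS by blast
  qed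
  have mI: "mask_of \<Gamma> \<in> I_masks T"
  proof -
    have "\<Gamma> \<noteq> {}"
    proof
      assume "\<Gamma> = {}"
      then have "finite (UNIV::nat set)" using finF by simp
      then show False by simp
    qed
    moreover have "\<exists>x\<in>T. set x \<subseteq> \<Gamma> \<and> \<sigma> \<in> set x" if sG: "\<sigma> \<in> \<Gamma>" for \<sigma>
    proof -
      have "infinite {n. w n = \<sigma>}" using sG by (simp add: \<Gamma>_def)
      then have "\<exists>n\<ge>p B. n \<in> {n. w n = \<sigma>}" unfolding infinite_nat_iff_unbounded_le by (elim allE)
      then obtain n where n: "p B \<le> n" "w n = \<sigma>" by auto
      obtain i where i: "p i \<le> n" "n < p (Suc i)" using interval_ex[OF sm p0] by blast
      have iB: "B \<le> i"
      proof (rule ccontr)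
        assume "\<not> B \<le> i"
        then have "p (Suc i) \<le> p B" using mo by (simp add: monoD)
        then show False using n i by linarith
      qed
      have "p B \<le> p i" using mo iB by (simp add: monoD)
      then have "set (w[p i \<rightarrow> p (Suc i)]) \<subseteq> \<Gamma>"
        using B pB by fastforce
      moreover have "\<sigma> \<in> set (w[p i \<rightarrow> p (Suc i)])" using i n by auto
      ultimately show ?thesis using pT by blast
    qed
    ultimately show ?thesis unfolding I_masks_def by blast
  qed
  have "parikh_omega (u \<frown> w) = parikh y \<oplus>\<^sub>m mask_of \<Gamma>"
  proof
    fix \<sigma>
    show "parikh_omega (u \<frown> w) \<sigma> = (parikh y \<oplus>\<^sub>m mask_of \<Gamma>) \<sigma>"
    proof (cases "\<sigma> \<in> \<Gamma>")
      case True
      have "infinite {n. v n = \<sigma>}"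
      proof
        assume fin: "finite {n. v n = \<sigma>}"
        have "{n. w n = \<sigma>} \<subseteq> {..<p B} \<union> (\<lambda>n. p B + n) ` {n. v n = \<sigma>}"
        proof
          fix n assume "n \<in> {n. w n = \<sigma>}"
          then show "n \<in> {..<p B} \<union> (\<lambda>n. p B + n) ` {n. v n = \<sigma>}"
            by (cases "n < p B") (auto simp: v_def image_iff intro!: exI[of _ "n - p B"])
        qed
        then have "finite {n. w n = \<sigma>}" using fin finite_subset by blast
        then show False using True by (simp add: \<Gamma>_def)
      qed
      then show ?thesis using True uw pos_inf by (simp add: mask_add_def mask_of_def)
    next
      case False
      have "\<forall>n. v n \<noteq> \<sigma>" using vG False by metis
      then show ?thesis using False uw pos_fin by (simp add: mask_add_def mask_of_def parikh_def)
    qed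
  qed
  then show ?thesis using yL mI by blast
qed


lemma sup_dir:
  fixes S T :: "('a::finite) list set"
  assumes uS: "u \<in> S" and xsT: "set xs \<subseteq> T" and eT: "[] \<notin> T"
    and Gne: "\<Gamma> \<noteq> {}" and wit: "\<forall>\<sigma>\<in>\<Gamma>. \<exists>x\<in>T. set x \<subseteq> \<Gamma> \<and> \<sigma> \<in> set x"
  shows "parikh (u @ concat xs) \<oplus>\<^sub>m mask_of \<Gamma> \<in> parikh_omega ` lang_omega_conc S (omega_power T)"
proof -
  obtain f where f: "\<And>\<sigma>. \<sigma> \<in> \<Gamma> \<Longrightarrow> f \<sigma> \<in> T \<and> set (f \<sigma>) \<subseteq> \<Gamma> \<and> \<sigma> \<in> set (f \<sigma>)"
    using wit by metis
  obtain gs where gs: "set gs = \<Gamma>" using finite_list[of \<Gamma>] by auto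
  define k where "k = length gs"
  have kpos: "0 < k" using gs Gne k_def by auto
  define M where "M = length xs"
  define q where "q i = (if i < M then xs ! i else f (gs ! ((i - M) mod k)))" for i
  have qT: "q i \<in> T" for i
  proof (cases "i < M")
    case True then show ?thesis using xsT by (auto simp: q_def M_def)
  next
    case False
    have "gs ! ((i - M) mod k) \<in> \<Gamma>" using gs kpos k_def by auto
    then show ?thesis using False f by (auto simp: q_def)
  qed
  have qG: "set (q i) \<subseteq> \<Gamma>" if "M \<le> i" for i
  proof -
    have "gs ! ((i - M) mod k) \<in> \<Gamma>" using gs kpos k_def by auto
    then show ?thesis using that f by (auto simp: q_def)
  qed
  have qne: "\<forall>i. q i \<noteq> []" using qT eT by metis
  define P where "P = cuts q"
  define W where "W = flat q"
  have sm: "strict_mono P" using cuts_sm[OF qne] by (simp add: P_def)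
  have P0: "P 0 = 0" by (simp add: P_def cuts_0)
  have mo: "mono P" using sm by (simp add: strict_mono_mono)
  have sub: "W[P i \<rightarrow> P (Suc i)] = q i" for i using flat_sub[OF qne] by (simp add: W_def P_def)
  have Wnth: "W (P i + r) = q i ! r" if "r < length (q i)" for i r
  proof -
    have "W[P i \<rightarrow> P (Suc i)] ! r = W (P i + r)"
      using that sub[of i] by (metis subsequence_length subsequence_nth)
    then show ?thesis using sub by simp
  qed
  have WT: "W \<in> omega_power T" unfolding omega_power_def using P0 sm sub qT by auto
  have pre: "W[0 \<rightarrow> P M] = concat xs"
  proof -
    have "W[0 \<rightarrow> P M] = concat (map (\<lambda>i. W[P i \<rightarrow> P (Suc i)]) [0..<M])"
      using concat_pieces[OF mo, of W M] P0 by simp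
    also have "\<dots> = concat (map (\<lambda>i. xs ! i) [0..<M])"
      by (intro arg_cong[where f=concat] map_cong) (auto simp: sub q_def)
    also have "\<dots> = concat xs" by (simp add: M_def map_nth)
    finally show ?thesis .
  qed
  define v where "v = suffix (P M) W"
  have uW: "u \<frown> W = (u @ concat xs) \<frown> v"
    unfolding v_def using prefix_suffix[of W "P M"] pre by (metis conc_conc)
  have vG: "v n \<in> \<Gamma>" for n
  proof -
    obtain i where i: "P i \<le> P M + n" "P M + n < P (Suc i)" using interval_ex[OF sm P0] by blast
    have iM: "M \<le> i"
    proof (rule ccontr)
      assume "\<not> M \<le> i"
      then have "P (Suc i) \<le> P M" using mo by (simp add: monoD)
      then show False using i by linarith
    qed
    have "v n = W[P i \<rightarrow> P (Suc i)] ! (P M + n - P i)"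
      using i by (simp add: v_def)
    moreover have "P M + n - P i < length (q i)" using i sub[of i]
      by (metis subsequence_length diff_less_mono)
    ultimately have "v n \<in> set (q i)" using sub by simp
    then show ?thesis using qG iM by auto
  qed
  have "parikh_omega (u \<frown> W) = parikh (u @ concat xs) \<oplus>\<^sub>m mask_of \<Gamma>"
  proof
    fix \<sigma>
    show "parikh_omega (u \<frown> W) \<sigma> = (parikh (u @ concat xs) \<oplus>\<^sub>m mask_of \<Gamma>) \<sigma>"
    proof (cases "\<sigma> \<in> \<Gamma>")
      case True
      then obtain j where j: "j < k" "gs ! j = \<sigma>" using gs k_def by (metis in_set_conv_nth)
      obtain r where r: "r < length (f \<sigma>)" "f \<sigma> ! r = \<sigma>"
        using f[OF True] by (metis in_set_conv_nth)
      have "infinite {n. v n = \<sigma>}"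
        unfolding infinite_nat_iff_unbounded_le
      proof
        fix t0
        define i where "i = M + (j + t0 * k)"
        have qi: "q i = f \<sigma>" using j kpos by (simp add: q_def i_def)
        have le: "P M + (j + t0 * k) \<le> P i" using sm_add[OF sm] by (simp add: i_def)
        have "t0 \<le> j + t0 * k" using kpos
          by (metis le_add2 le_trans mult.commute mult_le_mono1 mult_1 Suc_leI One_nat_def)
        then have ge: "t0 \<le> P i - P M + r" using le by linarith
        have "v (P i - P M + r) = W (P i + r)" using le by (simp add: v_def)
        also have "\<dots> = \<sigma>" using Wnth[of r i] qi r by simp
        finally show "\<exists>n\<ge>t0. n \<in> {n. v n = \<sigma>}" using ge by blast
      qed
      then show ?thesis using True uW pos_inf by (simp add: mask_add_def mask_of_def)
    next
      case False
      have "\<forall>n. v n \<noteq> \<sigma>" using vG False by metis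
      then have "parikh_omega ((u @ concat xs) \<frown> v) \<sigma> = enat (count_list (u @ concat xs) \<sigma>)"
        by (rule pos_fin)
      then show ?thesis using False uW by (simp add: mask_add_def mask_of_def parikh_def)
    qed
  qed
  moreover have "u \<frown> W \<in> lang_omega_conc S (omega_power T)"
    unfolding lang_omega_conc_def using uS WT by blast
  ultimately show ?thesis by (metis image_eqI)
qed

theorem mainTheorem2:
  fixes S T :: "('a::finite) list set"
  assumes "regular S" and "regular T" and "[] \<notin> T"
  shows "parikh_omega ` lang_omega_conc S (omega_power T) =
         {parikh y \<oplus>\<^sub>m m | y m. y \<in> lang_conc S (lang_star T) \<and> m \<in> I_masks T}"
proof
  show "parikh_omega ` lang_omega_conc S (omega_power T) \<subseteq>
         {parikh y \<oplus>\<^sub>m m | y m. y \<in> lang_conc S (lang_star T) \<and> m \<in> I_masks T}"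
  proof
    fix X assume "X \<in> parikh_omega ` lang_omega_conc S (omega_power T)"
    then obtain u w where "u \<in> S" "w \<in> omega_power T" "X = parikh_omega (u \<frown> w)"
      by (auto simp: lang_omega_conc_def)
    then show "X \<in> {parikh y \<oplus>\<^sub>m m | y m. y \<in> lang_conc S (lang_star T) \<and> m \<in> I_masks T}"
      using sub_dir by blast
  qed
next
  show "{parikh y \<oplus>\<^sub>m m | y m. y \<in> lang_conc S (lang_star T) \<and> m \<in> I_masks T}
     \<subseteq> parikh_omega ` lang_omega_conc S (omega_power T)"
  proof
    fix X assume "X \<in> {parikh y \<oplus>\<^sub>m m | y m. y \<in> lang_conc S (lang_star T) \<and> m \<in> I_masks T}"
    then obtain y m where ym: "X = parikh y \<oplus>\<^sub>m m" "y \<in> lang_conc S (lang_star T)" "m \<in> I_masks T"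
      by blast
    from ym(2) obtain u xs where "u \<in> S" "set xs \<subseteq> T" "y = u @ concat xs"
      by (auto simp: lang_conc_def lang_star_def)
    moreover from ym(3) obtain \<Gamma> where "m = mask_of \<Gamma>" "\<Gamma> \<noteq> {}"
      "\<forall>\<sigma>\<in>\<Gamma>. \<exists>x\<in>T. set x \<subseteq> \<Gamma> \<and> \<sigma> \<in> set x"
      by (auto simp: I_masks_def)
    ultimately show "X \<in> parikh_omega ` lang_omega_conc S (omega_power T)"
      using sup_dir[OF _ _ assms(3)] ym(1) by blast
  qed
qed

end
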